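(* Let $d\ge 1$, let $\Omega=\operatorname{diag}(\omega_j)_{j=1}^d\in\mathbb{R}^{d\times d}$ with all $\omega_j\ge 0$, and let $A\in\mathbb{C}^{d\times d}$ be self-adjoint. Let $0<h\le 1$ and let $\psi_1,\phi\colon\mathbb{R}\to\mathbb{R}$ be even functions such that $\psi_1(\xi)=\operatorname{sinc}(\xi)\phi(\xi)$ for all $\xi\in\mathbb{R}$ and, for constants $c_0,c_1\ge 0$, \[ |\psi_1(\xi)|\le c_0,\qquad |\phi(\xi)|\le c_0,\qquad |\phi(\xi)-1|\le c_1|\xi|\qquad\text{for all }\xi\in\mathbb{R}. \] Set $\Psi_1=\psi_1(h\Omega)$, $\Phi=\phi(h\Omega)$. For given $q_0,\dot q_0\in\mathbb{C}^d$, define $(q_n,\dot q_n)_{n\ge 0}$ recursively by \begin{align*} q_{n+1} &= \cos(h\Omega) q_n + h\operatorname{sinc}(h\Omega) \dot{q}_n - \tfrac12 h^2 \operatorname{sinc}(h\Omega) \Psi_1 A\Phi q_n,\\ \dot{q}_{n+1} &= -\Omega \sin(h\Omega) q_n + \cos(h\Omega) \dot{q}_n - \tfrac12 h \big( \cos(h\Omega) \Psi_1 A\Phi q_n + \Psi_1 A\Phi q_{n+1}\big). \end{align*} Then \[ \|\Omega q_n\| + \|\dot{q}_n\| \le C \qquad\text{for all } n\in\mathbb{N}, \] with a constant $C$ depending only on $c_0$, $\|A\|$, $\|q_0\|$, $\|\Omega q_0\|$, $\|\dot{q}_0\|$ and $\|q_n\|$.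
   Context: $\|\cdot\|$ is the Euclidean norm on $\mathbb{C}^d$ and, for matrices, the induced operator norm. $\operatorname{sinc}(\xi)=\sin(\xi)/\xi$ for $\xi\ne0$ and $\operatorname{sinc}(0)=1$. For a function $f\colon\mathbb{R}\to\mathbb{R}$, $f(h\Omega)$ denotes the diagonal matrix $\operatorname{diag}(f(h\omega_j))_{j=1}^d$. *)

theory Defs
  imports Complex_Main
begin

text \<open>Vectors in C^d are represented as functions nat => complex, of which only the
  entries with index < d matter; d x d matrices as nat => nat => complex (entries
  with indices < d matter). The dimension d is an ordinary variable so that it can be
  quantified inside the statement (the constant C must not depend on d).\<close>

definition sinc :: "real \<Rightarrow> real" where
  "sinc x = (if x = 0 then 1 else sin x / x)"

definition vnorm :: "nat \<Rightarrow> (nat \<Rightarrow> complex) \<Rightarrow> real" where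
  "vnorm d v = sqrt (\<Sum>j<d. (cmod (v j))^2)"

definition mvec :: "nat \<Rightarrow> (nat \<Rightarrow> nat \<Rightarrow> complex) \<Rightarrow> (nat \<Rightarrow> complex) \<Rightarrow> (nat \<Rightarrow> complex)" where
  "mvec d M v = (\<lambda>i. \<Sum>j<d. M i j * v j)"

definition opnorm :: "nat \<Rightarrow> (nat \<Rightarrow> nat \<Rightarrow> complex) \<Rightarrow> real" where
  "opnorm d M = Sup {vnorm d (mvec d M v) | v. vnorm d v \<le> 1}"

definition self_adjoint :: "nat \<Rightarrow> (nat \<Rightarrow> nat \<Rightarrow> complex) \<Rightarrow> bool" where
  "self_adjoint d M \<longleftrightarrow> (\<forall>i<d. \<forall>j<d. M i j = cnj (M j i))"

definition dapp :: "(real \<Rightarrow> real) \<Rightarrow> real \<Rightarrow> (nat \<Rightarrow> real) \<Rightarrow> (nat \<Rightarrow> complex) \<Rightarrow> (nat \<Rightarrow> complex)" where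
  "dapp f h \<omega> v = (\<lambda>j. complex_of_real (f (h * \<omega> j)) * v j)"

definition Omg :: "(nat \<Rightarrow> real) \<Rightarrow> (nat \<Rightarrow> complex) \<Rightarrow> (nat \<Rightarrow> complex)" where
  "Omg \<omega> v = (\<lambda>j. complex_of_real (\<omega> j) * v j)"

definition PAP :: "nat \<Rightarrow> (nat \<Rightarrow> real) \<Rightarrow> (nat \<Rightarrow> nat \<Rightarrow> complex) \<Rightarrow> real
   \<Rightarrow> (real \<Rightarrow> real) \<Rightarrow> (real \<Rightarrow> real) \<Rightarrow> (nat \<Rightarrow> complex) \<Rightarrow> (nat \<Rightarrow> complex)" where
  "PAP d \<omega> A h \<psi>1 \<phi> v = dapp \<psi>1 h \<omega> (mvec d A (dapp \<phi> h \<omega> v))"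

definition step :: "nat \<Rightarrow> (nat \<Rightarrow> real) \<Rightarrow> (nat \<Rightarrow> nat \<Rightarrow> complex) \<Rightarrow> real
   \<Rightarrow> (real \<Rightarrow> real) \<Rightarrow> (real \<Rightarrow> real)
   \<Rightarrow> (nat \<Rightarrow> complex) \<times> (nat \<Rightarrow> complex) \<Rightarrow> (nat \<Rightarrow> complex) \<times> (nat \<Rightarrow> complex)" where
  "step d \<omega> A h \<psi>1 \<phi> qp =
     (let q = fst qp; qd = snd qp;
          B = PAP d \<omega> A h \<psi>1 \<phi>;
          q' = (\<lambda>j. dapp cos h \<omega> q j + complex_of_real h * dapp sinc h \<omega> qd j
                    - complex_of_real (h^2 / 2) * dapp sinc h \<omega> (B q) j);
          qd' = (\<lambda>j. - Omg \<omega> (dapp sin h \<omega> q) j + dapp cos h \<omega> qd j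
                    - complex_of_real (h / 2) * (dapp cos h \<omega> (B q) j + B q' j))
      in (q', qd'))"

primrec traj :: "nat \<Rightarrow> (nat \<Rightarrow> real) \<Rightarrow> (nat \<Rightarrow> nat \<Rightarrow> complex) \<Rightarrow> real
   \<Rightarrow> (real \<Rightarrow> real) \<Rightarrow> (real \<Rightarrow> real) \<Rightarrow> (nat \<Rightarrow> complex) \<Rightarrow> (nat \<Rightarrow> complex)
   \<Rightarrow> nat \<Rightarrow> (nat \<Rightarrow> complex) \<times> (nat \<Rightarrow> complex)" where
  "traj d \<omega> A h \<psi>1 \<phi> q0 qd0 0 = (q0, qd0)"
| "traj d \<omega> A h \<psi>1 \<phi> q0 qd0 (Suc n) = step d \<omega> A h \<psi>1 \<phi> (traj d \<omega> A h \<psi>1 \<phi> q0 qd0 n)"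

end

theory Submission
  imports Defs
begin


lemma comp2:
  fixes c s w h \<sigma> \<phi> \<psi> :: real and q p u v q' p' :: complex
  assumes cs: "c^2 + s^2 = 1" and sw: "s = h*\<sigma>*w" and ps: "\<psi> = \<sigma> * \<phi>"
  and q': "q' = of_real c * q + of_real h * (of_real \<sigma> * p) - of_real (h^2/2) * (of_real \<sigma> * (of_real \<psi> * u))"
  and p': "p' = - (of_real w * (of_real s * q)) + of_real c * p - of_real (h/2) * (of_real c * (of_real \<psi> * u) + of_real \<psi> * v)"
  shows "(cmod (of_real w * q'))^2 + (cmod p')^2 + Re (of_real c * (of_real \<phi> * q') * cnj v) - h^2/4 * (cmod (of_real \<psi> * v))^2
       = (cmod (of_real w * q))^2 + (cmod p)^2 + Re (of_real c * (of_real \<phi> * q) * cnj u) - h^2/4 * (cmod (of_real \<psi> * u))^2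
         + Re (of_real \<phi> * q * cnj v) - Re (of_real \<phi> * q' * cnj u)"
  using cs sw ps unfolding q' p' cmod_power2
  by simp algebra



definition nsq :: "nat \<Rightarrow> (nat \<Rightarrow> complex) \<Rightarrow> real" where
  "nsq d v = (\<Sum>j<d. (cmod (v j))^2)"
definition rip :: "nat \<Rightarrow> (nat \<Rightarrow> complex) \<Rightarrow> (nat \<Rightarrow> complex) \<Rightarrow> real" where
  "rip d x y = Re (\<Sum>j<d. x j * cnj (y j))"

lemma vnorm_nsq: "vnorm d v = sqrt (nsq d v)" by (simp add: vnorm_def nsq_def)
lemma nsq_ge0: "nsq d v \<ge> 0" by (simp add: nsq_def sum_nonneg)
lemma vnorm_sq: "(vnorm d v)^2 = nsq d v" by (simp add: vnorm_nsq nsq_ge0)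

lemma rip_sa:
  assumes "self_adjoint d A"
  shows "rip d x (mvec d A y) = rip d y (mvec d A x)"
proof -
  have "(\<Sum>i<d. x i * cnj (mvec d A y i)) = cnj (\<Sum>j<d. y j * cnj (mvec d A x j))"
  proof -
    have sa: "cnj (A i j) = A j i" if "i < d" "j < d" for i j
      using assms that unfolding self_adjoint_def by (metis complex_cnj_cnj)
    have "(\<Sum>i<d. x i * cnj (mvec d A y i)) = (\<Sum>i<d. \<Sum>j<d. x i * A j i * cnj (y j))"
      by (auto simp: mvec_def sa sum_distrib_left mult.assoc intro!: sum.cong)
    also have "\<dots> = (\<Sum>j<d. \<Sum>i<d. x i * A j i * cnj (y j))" by (rule sum.swap)
    also have "\<dots> = cnj (\<Sum>j<d. y j * cnj (mvec d A x j))"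
      by (auto simp: mvec_def sum_distrib_left sum_distrib_right intro!: sum.cong)
    finally show ?thesis .
  qed
  then show ?thesis unfolding rip_def by simp
qed

definition Hm where
  "Hm d \<omega> A h \<psi>1 \<phi> q p = nsq d (Omg \<omega> q) + nsq d p
     + rip d (dapp cos h \<omega> (dapp \<phi> h \<omega> q)) (mvec d A (dapp \<phi> h \<omega> q))
     - h^2/4 * nsq d (PAP d \<omega> A h \<psi>1 \<phi> q)"

lemma Hm_step:
  assumes sa: "self_adjoint d A" and h: "0 < h" and ps: "\<forall>x. \<psi>1 x = sinc x * \<phi> x"
  shows "Hm d \<omega> A h \<psi>1 \<phi> (fst (step d \<omega> A h \<psi>1 \<phi> (q,p))) (snd (step d \<omega> A h \<psi>1 \<phi> (q,p)))
       = Hm d \<omega> A h \<psi>1 \<phi> q p"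
proof -
  define q' where "q' = fst (step d \<omega> A h \<psi>1 \<phi> (q,p))"
  define p' where "p' = snd (step d \<omega> A h \<psi>1 \<phi> (q,p))"
  define u where "u = mvec d A (dapp \<phi> h \<omega> q)"
  define v where "v = mvec d A (dapp \<phi> h \<omega> q')"
  have sw: "sin (h * \<omega> j) = h * sinc (h * \<omega> j) * \<omega> j" for j
    using h by (auto simp: sinc_def)
  have q'j: "q' j = of_real (cos (h * \<omega> j)) * q j + of_real h * (of_real (sinc (h * \<omega> j)) * p j)
       - of_real (h^2/2) * (of_real (sinc (h * \<omega> j)) * (of_real (\<psi>1 (h * \<omega> j)) * u j))" for j
    by (simp add: q'_def step_def Let_def dapp_def PAP_def u_def)
  have p'j: "p' j = - (of_real (\<omega> j) * (of_real (sin (h * \<omega> j)) * q j)) + of_real (cos (h * \<omega> j)) * p j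
       - of_real (h/2) * (of_real (cos (h * \<omega> j)) * (of_real (\<psi>1 (h * \<omega> j)) * u j) + of_real (\<psi>1 (h * \<omega> j)) * v j)" for j
    by (simp add: q'_def p'_def step_def Let_def dapp_def PAP_def u_def v_def Omg_def)
  have cj: "(cmod (of_real (\<omega> j) * q' j))^2 + (cmod (p' j))^2 + Re (of_real (cos (h * \<omega> j)) * (of_real (\<phi> (h * \<omega> j)) * q' j) * cnj (v j)) - h^2/4 * (cmod (of_real (\<psi>1 (h * \<omega> j)) * v j))^2
       = (cmod (of_real (\<omega> j) * q j))^2 + (cmod (p j))^2 + Re (of_real (cos (h * \<omega> j)) * (of_real (\<phi> (h * \<omega> j)) * q j) * cnj (u j)) - h^2/4 * (cmod (of_real (\<psi>1 (h * \<omega> j)) * u j))^2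
         + Re (of_real (\<phi> (h * \<omega> j)) * q j * cnj (v j)) - Re (of_real (\<phi> (h * \<omega> j)) * q' j * cnj (u j))" for j
    by (rule comp2[OF _ sw ps[rule_format] q'j p'j]) simp
  have e1: "nsq d (Omg \<omega> x) = (\<Sum>j<d. (cmod (of_real (\<omega> j) * x j))^2)" for x
    by (simp add: nsq_def Omg_def)
  have e2: "rip d (dapp cos h \<omega> (dapp \<phi> h \<omega> q)) (mvec d A (dapp \<phi> h \<omega> q))
     = (\<Sum>j<d. Re (of_real (cos (h * \<omega> j)) * (of_real (\<phi> (h * \<omega> j)) * q j) * cnj (u j)))"
    by (simp add: rip_def dapp_def u_def Re_sum)
  have e3: "rip d (dapp cos h \<omega> (dapp \<phi> h \<omega> q')) (mvec d A (dapp \<phi> h \<omega> q'))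
     = (\<Sum>j<d. Re (of_real (cos (h * \<omega> j)) * (of_real (\<phi> (h * \<omega> j)) * q' j) * cnj (v j)))"
    by (simp add: rip_def dapp_def v_def Re_sum)
  have e4: "nsq d (PAP d \<omega> A h \<psi>1 \<phi> q) = (\<Sum>j<d. (cmod (of_real (\<psi>1 (h * \<omega> j)) * u j))^2)"
    by (simp add: nsq_def PAP_def dapp_def u_def)
  have e5: "nsq d (PAP d \<omega> A h \<psi>1 \<phi> q') = (\<Sum>j<d. (cmod (of_real (\<psi>1 (h * \<omega> j)) * v j))^2)"
    by (simp add: nsq_def PAP_def dapp_def v_def)
  have e6: "rip d (dapp \<phi> h \<omega> q) (mvec d A (dapp \<phi> h \<omega> q')) = (\<Sum>j<d. Re (of_real (\<phi> (h * \<omega> j)) * q j * cnj (v j)))"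
    by (simp add: rip_def dapp_def v_def Re_sum)
  have e7: "rip d (dapp \<phi> h \<omega> q') (mvec d A (dapp \<phi> h \<omega> q)) = (\<Sum>j<d. Re (of_real (\<phi> (h * \<omega> j)) * q' j * cnj (u j)))"
    by (simp add: rip_def dapp_def u_def Re_sum)
  have "Hm d \<omega> A h \<psi>1 \<phi> q' p' = Hm d \<omega> A h \<psi>1 \<phi> q p
     + rip d (dapp \<phi> h \<omega> q) (mvec d A (dapp \<phi> h \<omega> q')) - rip d (dapp \<phi> h \<omega> q') (mvec d A (dapp \<phi> h \<omega> q))"
    unfolding Hm_def e1 e2 e3 e4 e5 e6 e7 nsq_def[of d p] nsq_def[of d p']
    using sum.cong[OF refl cj, where A="{..<d}"]
    by (simp add: sum.distrib sum_subtractf sum_distrib_left)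
  then show ?thesis using rip_sa[OF sa] unfolding q'_def p'_def by simp
qed



lemma Hm_traj:
  assumes sa: "self_adjoint d A" and h: "0 < h" and ps: "\<forall>x. \<psi>1 x = sinc x * \<phi> x"
  shows "Hm d \<omega> A h \<psi>1 \<phi> (fst (traj d \<omega> A h \<psi>1 \<phi> q0 qd0 n)) (snd (traj d \<omega> A h \<psi>1 \<phi> q0 qd0 n))
       = Hm d \<omega> A h \<psi>1 \<phi> q0 qd0"
proof (induction n)
  case 0 then show ?case by simp
next
  case (Suc n)
  have "traj d \<omega> A h \<psi>1 \<phi> q0 qd0 (Suc n) = step d \<omega> A h \<psi>1 \<phi> (fst (traj d \<omega> A h \<psi>1 \<phi> q0 qd0 n), snd (traj d \<omega> A h \<psi>1 \<phi> q0 qd0 n))"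
    by simp
  obtain a b where ab: "traj d \<omega> A h \<psi>1 \<phi> q0 qd0 n = (a, b)" by fastforce
  show ?case using Hm_step[OF sa h ps, of \<omega> a b] Suc by (simp add: ab)
qed

lemma nsq_dapp:
  assumes "\<forall>j<d. \<bar>f (h * \<omega> j)\<bar> \<le> K"
  shows "nsq d (dapp f h \<omega> v) \<le> K^2 * nsq d v"
  unfolding nsq_def dapp_def sum_distrib_left
proof (rule sum_mono)
  fix j assume "j \<in> {..<d}"
  then have "\<bar>f (h * \<omega> j)\<bar> \<le> K" using assms by auto
  then have "(f (h * \<omega> j))^2 \<le> K^2"
    using power_mono[of "\<bar>f (h * \<omega> j)\<bar>" K 2] by simp
  then show "(cmod (complex_of_real (f (h * \<omega> j)) * v j))\<^sup>2 \<le> K\<^sup>2 * (cmod (v j))\<^sup>2"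
    by (simp add: norm_mult power_mult_distrib mult_right_mono)
qed

lemma rip_le: "\<bar>rip d x y\<bar> \<le> (nsq d x + nsq d y) / 2"
proof -
  have "\<bar>rip d x y\<bar> \<le> cmod (\<Sum>j<d. x j * cnj (y j))" unfolding rip_def by (rule abs_Re_le_cmod)
  also have "\<dots> \<le> (\<Sum>j<d. cmod (x j * cnj (y j)))" by (rule norm_sum)
  also have "\<dots> \<le> (\<Sum>j<d. ((cmod (x j))^2 + (cmod (y j))^2) / 2)"
  proof (rule sum_mono)
    fix j
    have "0 \<le> (cmod (x j) - cmod (y j))^2" by simp
    then show "cmod (x j * cnj (y j)) \<le> ((cmod (x j))^2 + (cmod (y j))^2) / 2"
      by (simp add: norm_mult power2_diff)
  qed
  also have "\<dots> = (nsq d x + nsq d y) / 2"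
    unfolding nsq_def by (simp add: sum.distrib flip: sum_divide_distrib)
  finally show ?thesis .
qed

lemma nsq_zero:
  assumes "nsq d v = 0" "j < d" shows "v j = 0"
proof -
  have "\<forall>j\<in>{..<d}. (cmod (v j))^2 = 0"
    using assms(1) unfolding nsq_def by (subst sum_nonneg_eq_0_iff[symmetric]) auto
  then show ?thesis using assms(2) by auto
qed

lemma opn: "nsq d (mvec d A v) \<le> (opnorm d A)^2 * nsq d v"
proof -
  define M where "M = (\<Sum>i<d. (\<Sum>j<d. cmod (A i j))^2)"
  have bd: "vnorm d (mvec d A w) \<le> sqrt M" if w: "vnorm d w \<le> 1" for w
  proof -
    have nw: "nsq d w \<le> 1" using w vnorm_nsq by simp
    have wj: "cmod (w j) \<le> 1" if "j < d" for j
    proof -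
      have "(cmod (w j))^2 \<le> nsq d w" unfolding nsq_def
        by (rule member_le_sum) (use that in auto)
      then have "(cmod (w j))^2 \<le> 1" using nw by simp
      then show ?thesis by (simp add: power_le_one_iff abs_square_le_1)
    qed
    have "nsq d (mvec d A w) \<le> M" unfolding nsq_def M_def
    proof (rule sum_mono)
      fix i assume "i \<in> {..<d}"
      have "cmod (mvec d A w i) \<le> (\<Sum>j<d. cmod (A i j * w j))" unfolding mvec_def by (rule norm_sum)
      also have "\<dots> \<le> (\<Sum>j<d. cmod (A i j))"
        by (rule sum_mono) (use wj in \<open>auto simp: norm_mult intro: mult_left_le\<close>)
      finally show "(cmod (mvec d A w i))^2 \<le> (\<Sum>j<d. cmod (A i j))^2"
        by (rule power_mono) simp
    qed
    then show ?thesis unfolding vnorm_nsq by simp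
  qed
  have bdd: "bdd_above {vnorm d (mvec d A v) | v. vnorm d v \<le> 1}"
    using bd by (auto intro!: bdd_aboveI)
  have up: "vnorm d (mvec d A w) \<le> opnorm d A" if "vnorm d w \<le> 1" for w
    unfolding opnorm_def by (rule cSup_upper) (use that bdd in auto)
  show ?thesis
  proof (cases "nsq d v = 0")
    case True
    then have "mvec d A v i = 0" if "i < d" for i
      using nsq_zero[OF True] by (simp add: mvec_def)
    then have "nsq d (mvec d A v) = 0" by (simp add: nsq_def)
    then show ?thesis using True by simp
  next
    case False
    define t where "t = vnorm d v"
    have tp: "t > 0" using False nsq_ge0[of d v] by (simp add: t_def vnorm_nsq)
    have t2: "t^2 = nsq d v" by (simp add: t_def vnorm_sq)
    define w where "w = (\<lambda>j. v j / of_real t)"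
    have "nsq d w = nsq d v / t^2"
      by (simp add: w_def nsq_def norm_divide power_divide sum_divide_distrib)
    then have "nsq d w = 1" using t2 tp False by simp
    then have "vnorm d w \<le> 1" by (simp add: vnorm_nsq)
    then have a: "vnorm d (mvec d A w) \<le> opnorm d A" by (rule up)
    have "mvec d A w = (\<lambda>i. mvec d A v i / of_real t)"
      by (simp add: w_def mvec_def sum_divide_distrib)
    then have "nsq d (mvec d A w) = nsq d (mvec d A v) / t^2"
      by (simp add: nsq_def norm_divide power_divide sum_divide_distrib)
    moreover have "nsq d (mvec d A w) \<le> (opnorm d A)^2"
      using a vnorm_sq[of d "mvec d A w"] by (metis power_mono vnorm_nsq real_sqrt_ge_zero nsq_ge0)
    ultimately have "nsq d (mvec d A v) / t^2 \<le> (opnorm d A)^2" by simp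
    then show ?thesis using t2 tp nsq_ge0[of d v] by (simp add: divide_le_eq split: if_splits)
  qed
qed

lemma sum_sqrt: "vnorm d x + vnorm d y \<le> sqrt (2 * (nsq d x + nsq d y))"
proof (rule real_le_rsqrt)
  have "(vnorm d x + vnorm d y)^2 \<le> 2 * ((vnorm d x)^2 + (vnorm d y)^2)"
    using sum_squares_bound[of "vnorm d x" "vnorm d y"]
    by (simp add: power2_sum power2_diff)
  then show "(vnorm d x + vnorm d y)^2 \<le> 2 * (nsq d x + nsq d y)" by (simp add: vnorm_sq)
qed




lemma lin_aux:
  fixes En E0 rn r0 tn t0 Pn K a0 b0 an bn A0 B0 An Bn :: real
  assumes "En + rn - tn = E0 + r0 - t0" "0 \<le> t0" "tn \<le> Pn" "Pn \<le> K" "r0 \<le> \<bar>r0\<bar>" "-rn \<le> \<bar>rn\<bar>"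
    "\<bar>r0\<bar> \<le> (a0+b0)/2" "\<bar>rn\<bar> \<le> (an+bn)/2" "a0 \<le> A0" "b0 \<le> B0" "an \<le> An" "bn \<le> Bn"
  shows "En \<le> E0 + (A0+B0)/2 + (An+Bn)/2 + K"
  using assms unfolding add_divide_distrib by linarith

lemma main_bound:
  fixes \<omega> :: "nat \<Rightarrow> real" and q0 qd0 :: "nat \<Rightarrow> complex" and n :: nat
  assumes sa: "self_adjoint d A" and h: "0 < h" "h \<le> 1" and ps: "\<forall>x. \<psi>1 x = sinc x * \<phi> x"
    and c0: "c0 \<ge> 0" and b1: "\<forall>x. \<bar>\<psi>1 x\<bar> \<le> c0" and b2: "\<forall>x. \<bar>\<phi> x\<bar> \<le> c0"
  shows "vnorm d (Omg \<omega> (fst (traj d \<omega> A h \<psi>1 \<phi> q0 qd0 n))) + vnorm d (snd (traj d \<omega> A h \<psi>1 \<phi> q0 qd0 n)) \<le>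
     sqrt (2 * ((vnorm d (Omg \<omega> q0))^2 + (vnorm d qd0)^2
       + (c0^2 * (vnorm d q0)^2 + (opnorm d A)^2 * c0^2 * (vnorm d q0)^2) / 2
       + (c0^2 * (vnorm d (fst (traj d \<omega> A h \<psi>1 \<phi> q0 qd0 n)))^2 + (opnorm d A)^2 * c0^2 * (vnorm d (fst (traj d \<omega> A h \<psi>1 \<phi> q0 qd0 n)))^2) / 2
       + c0^2 * ((opnorm d A)^2 * c0^2 * (vnorm d (fst (traj d \<omega> A h \<psi>1 \<phi> q0 qd0 n)))^2)))"
proof -
  define qn where "qn = fst (traj d \<omega> A h \<psi>1 \<phi> q0 qd0 n)"
  define pn where "pn = snd (traj d \<omega> A h \<psi>1 \<phi> q0 qd0 n)"
  let ?a = "opnorm d A"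
  have cosb: "\<forall>j<d. \<bar>cos (h * \<omega> j)\<bar> \<le> 1" by simp
  have B1: "nsq d (dapp cos h \<omega> (dapp \<phi> h \<omega> q)) \<le> c0^2 * nsq d q" for q
    using nsq_dapp[OF cosb, of "dapp \<phi> h \<omega> q"] nsq_dapp[of d \<phi> h \<omega> c0 q] b2 by auto
  have B2: "nsq d (mvec d A (dapp \<phi> h \<omega> q)) \<le> ?a^2 * c0^2 * nsq d q" for q
  proof -
    have "nsq d (mvec d A (dapp \<phi> h \<omega> q)) \<le> ?a^2 * nsq d (dapp \<phi> h \<omega> q)" by (rule opn)
    also have "\<dots> \<le> ?a^2 * (c0^2 * nsq d q)" by (rule mult_left_mono[OF nsq_dapp]) (use b2 in auto)
    finally show ?thesis by (simp add: mult.assoc)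
  qed
  have B3: "nsq d (PAP d \<omega> A h \<psi>1 \<phi> q) \<le> c0^2 * (?a^2 * c0^2 * nsq d q)" for q
  proof -
    have "nsq d (PAP d \<omega> A h \<psi>1 \<phi> q) \<le> c0^2 * nsq d (mvec d A (dapp \<phi> h \<omega> q))"
      unfolding PAP_def by (rule nsq_dapp) (use b1 in auto)
    also have "\<dots> \<le> c0^2 * (?a^2 * c0^2 * nsq d q)" by (rule mult_left_mono[OF B2]) simp
    finally show ?thesis .
  qed
  have H: "Hm d \<omega> A h \<psi>1 \<phi> qn pn = Hm d \<omega> A h \<psi>1 \<phi> q0 qd0"
    unfolding qn_def pn_def by (rule Hm_traj[OF sa h(1) ps])
  have h2: "h^2/4 \<le> 1" using h power_mono[of h 1 2] by simp
  have P0: "0 \<le> nsq d (PAP d \<omega> A h \<psi>1 \<phi> q0)" by (rule nsq_ge0)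
  have Pn: "h^2/4 * nsq d (PAP d \<omega> A h \<psi>1 \<phi> qn) \<le> nsq d (PAP d \<omega> A h \<psi>1 \<phi> qn)"
    using mult_right_mono[OF h2 nsq_ge0[of d "PAP d \<omega> A h \<psi>1 \<phi> qn"]] by simp
  have P0': "0 \<le> h^2/4 * nsq d (PAP d \<omega> A h \<psi>1 \<phi> q0)" using P0 by simp
  note R0 = rip_le[of d "dapp cos h \<omega> (dapp \<phi> h \<omega> q0)" "mvec d A (dapp \<phi> h \<omega> q0)"]
  note Rn = rip_le[of d "dapp cos h \<omega> (dapp \<phi> h \<omega> qn)" "mvec d A (dapp \<phi> h \<omega> qn)"]
  have E: "nsq d (Omg \<omega> qn) + nsq d pn \<le>
     (nsq d (Omg \<omega> q0)) + (nsq d qd0)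
       + (c0^2 * (nsq d q0) + ?a^2 * c0^2 * (nsq d q0)) / 2
       + (c0^2 * (nsq d qn) + ?a^2 * c0^2 * (nsq d qn)) / 2
       + c0^2 * (?a^2 * c0^2 * (nsq d qn))"
    using H unfolding Hm_def
    by (rule lin_aux[OF _ P0' Pn B3[of qn] abs_ge_self abs_ge_minus_self R0 Rn B1[of q0] B2[of q0] B1[of qn] B2[of qn]])
  show ?thesis
    unfolding qn_def[symmetric] pn_def[symmetric]
    by (rule order.trans[OF sum_sqrt]) (use E in \<open>simp add: vnorm_sq add_divide_distrib\<close>)
qed

theorem lemma3:
  "\<exists>C :: real \<Rightarrow> real \<Rightarrow> real \<Rightarrow> real \<Rightarrow> real \<Rightarrow> real \<Rightarrow> real.
    \<forall>(d::nat) (\<omega>::nat \<Rightarrow> real) (A::nat \<Rightarrow> nat \<Rightarrow> complex) (h::real)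
      (\<psi>1::real \<Rightarrow> real) (\<phi>::real \<Rightarrow> real) (c0::real) (c1::real)
      (q0::nat \<Rightarrow> complex) (qd0::nat \<Rightarrow> complex) (n::nat).
      d \<ge> 1 \<and> (\<forall>j<d. \<omega> j \<ge> 0) \<and> self_adjoint d A \<and> 0 < h \<and> h \<le> 1
      \<and> (\<forall>x. \<psi>1 (-x) = \<psi>1 x) \<and> (\<forall>x. \<phi> (-x) = \<phi> x)
      \<and> (\<forall>x. \<psi>1 x = sinc x * \<phi> x)
      \<and> c0 \<ge> 0 \<and> c1 \<ge> 0
      \<and> (\<forall>x. \<bar>\<psi>1 x\<bar> \<le> c0) \<and> (\<forall>x. \<bar>\<phi> x\<bar> \<le> c0) \<and> (\<forall>x. \<bar>\<phi> x - 1\<bar> \<le> c1 * \<bar>x\<bar>)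
      \<longrightarrow> vnorm d (Omg \<omega> (fst (traj d \<omega> A h \<psi>1 \<phi> q0 qd0 n)))
            + vnorm d (snd (traj d \<omega> A h \<psi>1 \<phi> q0 qd0 n))
          \<le> C c0 (opnorm d A) (vnorm d q0) (vnorm d (Omg \<omega> q0)) (vnorm d qd0)
               (vnorm d (fst (traj d \<omega> A h \<psi>1 \<phi> q0 qd0 n)))"
proof -
  define C :: "real \<Rightarrow> real \<Rightarrow> real \<Rightarrow> real \<Rightarrow> real \<Rightarrow> real \<Rightarrow> real" where
    "C = (\<lambda>c0 a Q0 W P Qn. sqrt (2 * (W^2 + P^2 + (c0^2 * Q0^2 + a^2 * c0^2 * Q0^2) / 2
            + (c0^2 * Qn^2 + a^2 * c0^2 * Qn^2) / 2 + c0^2 * (a^2 * c0^2 * Qn^2))))"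
  show ?thesis
    apply (rule exI[of _ C])
    apply (intro allI impI)
    subgoal for d \<omega> A h \<psi>1 \<phi> c0 c1 q0 qd0 n
      unfolding C_def by (rule main_bound) auto
    done
qed


end
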